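(* Consider the real ODE system $$\frac{dp}{dt}=p\,(pR(v_c)-Q(v_c)),\qquad \frac{dv_c}{dt}=-\frac{p}{4}(1+v_c^2)+\frac12(1-v_c^2),$$ with $R(v)=\frac12\left(\frac1v-v\right)$, $Q(v)=\frac12\left(\frac1v+v\right)$. Let $\lambda=1/100$, $\mu=1/5$, $p_b(v)=\frac{Q(v)+\mu}{R(v)-\lambda}$ for $0<v<\sqrt{1-2\lambda}$, and $\Omega_b=\{(v,p):0<v<\sqrt{1-2\lambda},\ p\ge p_b(v)\}$. If $(v_c(0),p(0))\in\Omega_b$, then, with $D=p(0)/(\lambda p(0)+\mu)$, for all $t>0$ in the existence interval $$p(t)>\frac{\mu De^{\mu t}}{1-\lambda De^{\mu t}},$$ and hence $p(t)\to\infty$ at some finite time $t_c$ with $0<t_c<-\frac{1}{\mu}\ln(\lambda D)$; moreover the quantities $N_2(t)^2=2\pi p(t)^2\left(\frac{1}{v_c(t)}+v_c(t)\right)$ and $N_0(t)=2|p(t)|\max\!\left(\frac{1}{v_c(t)},v_c(t)\right)$ also tend to $\infty$ as $t\to t_c^-$.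
   Context: This system is the form, with dissipation coefficient normalized to $\nu=1$, of the pole-dynamics ODEs for the generalized Constantin–Lax–Majda equation with $a=1/2$, $\sigma=1$, written in the variable $p=\omega_{-2,i}/(v_c(1-v_c^2))$. The quantities $N_2$ and $N_0$ equal the $L^2(-\pi,\pi)$ norm and the Wiener ($\ell^1$ of Fourier coefficients) norm, respectively, of the associated periodic solution $\omega(\cdot,t)$. *)

theory Defs
  imports "HOL-Analysis.Analysis"
begin

definition Rf :: "real \<Rightarrow> real" where "Rf v = (1/v - v) / 2"
definition Qf :: "real \<Rightarrow> real" where "Qf v = (1/v + v) / 2"

definition lam :: real where "lam = 1/100"
definition mu :: real where "mu = 1/5"

definition p_b :: "real \<Rightarrow> real" where "p_b v = (Qf v + mu) / (Rf v - lam)"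

definition Omega_b :: "(real \<times> real) set" where
  "Omega_b = {(v, p). 0 < v \<and> v < sqrt (1 - 2*lam) \<and> p \<ge> p_b v}"

definition is_sol :: "(real \<Rightarrow> real) \<Rightarrow> (real \<Rightarrow> real) \<Rightarrow> ereal \<Rightarrow> bool" where
  "is_sol v p b \<longleftrightarrow> 0 < b \<and>
     (\<forall>t. 0 \<le> t \<and> ereal t < b \<longrightarrow>
        v t \<noteq> 0 \<and>
        (p has_real_derivative (p t * (p t * Rf (v t) - Qf (v t))))
           (at t within {s. 0 \<le> s \<and> ereal s < b}) \<and>
        (v has_real_derivative (- p t / 4 * (1 + (v t)^2) + (1 - (v t)^2) / 2))
           (at t within {s. 0 \<le> s \<and> ereal s < b}))"

text \<open>Maximal (non-extendable) solution: [0,b) is the existence interval.\<close>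
definition is_max_sol :: "(real \<Rightarrow> real) \<Rightarrow> (real \<Rightarrow> real) \<Rightarrow> ereal \<Rightarrow> bool" where
  "is_max_sol v p b \<longleftrightarrow> is_sol v p b \<and>
     (\<forall>b' v' p'. b < b' \<and> is_sol v' p' b' \<longrightarrow>
        \<not> (\<forall>t. 0 \<le> t \<and> ereal t < b \<longrightarrow> v' t = v t \<and> p' t = p t))"

end

theory Submission
  imports Defs "HOL-Analysis.Analysis"
begin

definition F1 :: "real \<Rightarrow> real \<Rightarrow> real" where "F1 v p = p * (p * Rf v - Qf v)"
definition F2 :: "real \<Rightarrow> real \<Rightarrow> real" where "F2 v p = - p / 4 * (1 + v^2) + (1 - v^2) / 2"
definition nfn :: "real \<Rightarrow> real" where "nfn v = 1 + v^2 + 2 * mu * v"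
definition dfn :: "real \<Rightarrow> real" where "dfn v = 1 - v^2 - 2 * lam * v"
definition Hf :: "real \<Rightarrow> real \<Rightarrow> real" where "Hf v p = p * dfn v - nfn v"
definition dHf :: "real \<Rightarrow> real \<Rightarrow> real" where
  "dHf v p = F1 v p * dfn v + p * (- 2 * v - 2 * lam) * F2 v p - (2 * v + 2 * mu) * F2 v p"

lemma F1_eq: "v \<noteq> 0 \<Longrightarrow> F1 v p = p * (lam * p + mu + Hf v p / (2 * v))"
  unfolding F1_def Hf_def Rf_def Qf_def nfn_def dfn_def lam_def mu_def
  by (simp add: field_simps power2_eq_square)

lemma poly_pos:
  fixes v :: real assumes "0 < v" "v < 1"
  shows "0 < 21/200 - 437/500* v + 19583/25000* v^2 + 7399/1250* v^3 + 15413/25000* v^4 - 443/500* v^5 + 19/200* v^6"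
proof -
  define r :: real where "r = 9/50"
  define S where "S = 738496943/250000000 + 2366111/390625* v + 153397/500000* v^2 - 4259/5000* v^3 + 19/200* v^4"
  have id: "21/200 - 437/500* v + 19583/25000* v^2 + 7399/1250* v^3 + 15413/25000* v^4 - 443/500* v^5 + 19/200* v^6
     = 25197987099/3125000000000 - 213097277/31250000000 * (v - r) + (v - r)^2 * S"
    unfolding S_def r_def by algebra
  have v3: "v^3 \<le> v" using assms by (simp add: power_le_one power3_eq_cube mult_le_one mult_le_cancel_left1)
  have v4: "0 \<le> v^4" by simp
  have v2: "0 \<le> v^2" by simp
  have "S > 0" unfolding S_def using assms v3 v4 v2 by linarith
  then have "(v - r)^2 * S \<ge> 0" by simp
  moreover have "25197987099/3125000000000 - 213097277/31250000000 * (v - r) > 0"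
    using assms unfolding r_def by (simp add: right_diff_distrib)
  ultimately show ?thesis by (subst id) linarith
qed

lemma key_pos:
  assumes v: "0 < v" and p: "0 < p" and H: "Hf v p = 0"
  shows "dHf v p > 0"
proof -
  have pd: "p * dfn v = nfn v" using H by (simp add: Hf_def)
  have n: "nfn v > 0" unfolding nfn_def mu_def using v by (simp add: add_pos_pos)
  have d: "dfn v > 0" using pd n p by (metis zero_less_mult_pos)
  have v1: "v < 1"
  proof (rule ccontr)
    assume "\<not> v < 1" then have "v^2 \<ge> 1" by (simp add: one_le_power)
    then show False using d v unfolding dfn_def lam_def by simp
  qed
  have pe: "p = nfn v / dfn v" using pd d by (simp add: field_simps)
  have F1e: "F1 v p = p * (lam * p + mu)" using F1_eq[of v p] v H by simp
  have "(dfn v)^2 * dHf v p = 21/200 - 437/500* v + 19583/25000* v^2 + 7399/1250* v^3 + 15413/25000* v^4 - 443/500* v^5 + 19/200* v^6"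
  proof -
    have dn: "dfn v \<noteq> 0" using d by simp
    have e1: "(dfn v)^2 * dHf v p = nfn v * dfn v * (lam * nfn v + mu * dfn v) - (nfn v * (v+lam) + (v+mu) * dfn v) * (2 * (1-v^2) * dfn v - nfn v * (1+v^2))/2"
      unfolding dHf_def F1e F2_def unfolding pe using dn by (simp add: field_simps power2_eq_square)
    have e2: "lam = 1/100 \<Longrightarrow> mu = 1/5 \<Longrightarrow> n = 1 + v^2 + 2 * mu * v \<Longrightarrow> d = 1 - v^2 - 2 * lam * v \<Longrightarrow>
      n * d * (lam * n + mu * d) - (n * (v+lam) + (v+mu) * d) * (2 * (1-v^2) * d - n * (1+v^2))/2 = 
      21/200 - 437/500 * v + 19583/25000 * v^2 + 7399/1250 * v^3 + 15413/25000 * v^4 - 443/500 * v^5 + 19/200 * v^6" for n d :: real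
      by algebra
    show ?thesis unfolding e1 by (rule e2) (auto simp: lam_def mu_def nfn_def dfn_def)
  qed
  then have "(dfn v)^2 * dHf v p > 0" using poly_pos[OF v v1] by simp
  then show ?thesis using d by (simp add: zero_less_mult_iff)
qed

lemma picard_local:
  fixes F :: "real \<times> real \<Rightarrow> real \<times> real" and x0 :: "real \<times> real"
  assumes r: "r > 0" and Fc: "continuous_on (cball x0 r) F"
    and FM: "\<And>x. x \<in> cball x0 r \<Longrightarrow> norm (F x) \<le> M"
    and FK: "\<And>x y. x \<in> cball x0 r \<Longrightarrow> y \<in> cball x0 r \<Longrightarrow> norm (F x - F y) \<le> K * norm (x - y)"
    and d: "d > 0" "d * M \<le> r" "d * K \<le> 1/2" and K: "K \<ge> 0"
  shows "\<exists>x. x t0 = x0 \<and> (\<forall>t\<in>{t0..t0+d}. x t \<in> cball x0 r \<and>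
            (x has_vector_derivative F (x t)) (at t within {t0..t0+d}))"
proof -
  define cl where "cl t = max t0 (min (t0+d) t)" for t
  have cl_in: "cl t \<in> {t0..t0+d}" for t using d unfolding cl_def by auto
  have cl_cont: "continuous_on UNIV cl" unfolding cl_def by (intro continuous_intros)
  have cl_id: "t \<in> {t0..t0+d} \<Longrightarrow> cl t = t" for t unfolding cl_def by auto
  have M0: "M \<ge> 0" using FM[of x0] r by (meson centre_in_cball less_imp_le norm_ge_zero order_trans)
  define S where "S = {f :: real \<Rightarrow>\<^sub>C (real \<times> real). \<forall>t. apply_bcontfun f t \<in> cball x0 r}"
  define G where "G f = (\<lambda>t. x0 + integral {t0..cl t} (\<lambda>s. F (apply_bcontfun f s)))" for f :: "real \<Rightarrow>\<^sub>C (real \<times> real)"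
  have Fcont: "continuous_on A (\<lambda>s. F (apply_bcontfun f s))" if "f \<in> S" for f A
    by (rule continuous_on_compose2[OF Fc]) (use that in \<open>auto simp: S_def\<close>)
  have Gbd: "norm (G f t - x0) \<le> r" if "f \<in> S" for f t
  proof -
    have "norm (integral {t0..cl t} (\<lambda>s. F (apply_bcontfun f s))) \<le> M * (cl t - t0)"
      by (rule integral_bound) (use cl_in[of t] Fcont[OF that] FM that in \<open>auto simp: S_def\<close>)
    also have "\<dots> \<le> M * d" using cl_in[of t] M0 by (intro mult_left_mono) auto
    finally show ?thesis using d by (simp add: G_def mult.commute)
  qed
  have Gin: "G f \<in> bcontfun" if "f \<in> S" for f
  proof (rule bcontfun_normI)
    have "continuous_on {t0..t0+d} (\<lambda>u. integral {t0..u} (\<lambda>s. F (apply_bcontfun f s)))"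
      by (rule indefinite_integral_continuous_1, rule integrable_continuous_interval, rule Fcont[OF that])
    then have "continuous_on UNIV (\<lambda>t. integral {t0..cl t} (\<lambda>s. F (apply_bcontfun f s)))"
      by (rule continuous_on_compose2[OF _ cl_cont]) (use cl_in in auto)
    then show "continuous_on UNIV (G f)" unfolding G_def by (intro continuous_intros)
    show "norm (G f t) \<le> norm x0 + r" for t
      using Gbd[OF that, of t] norm_triangle_sub[of "G f t" x0] by linarith
  qed
  define T where "T f = Bcontfun (G f)" for f
  have Tapp: "f \<in> S \<Longrightarrow> apply_bcontfun (T f) = G f" for f
    unfolding T_def using Gin by (simp add: Bcontfun_inverse)
  have closedS: "closed S"
  proof -
    have "S = PiC UNIV (\<lambda>_. cball x0 r)" unfolding S_def by (auto simp: mem_PiC_iff Pi_iff)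
    then show ?thesis by (auto intro!: closed_PiC)
  qed
  have "x0 \<in> cball x0 r" using r by simp
  then have const_in: "const_bcontfun x0 \<in> S" unfolding S_def by (simp add: const_bcontfun.rep_eq)
  have TS: "T ` S \<subseteq> S"
  proof
    fix g assume "g \<in> T ` S"
    then obtain f where f: "f \<in> S" "g = T f" by auto
    show "g \<in> S" using Gbd[OF f(1)] Tapp[OF f(1)] f(2) by (auto simp: S_def dist_norm norm_minus_commute)
  qed
  have contr: "dist (T f) (T g) \<le> (1/2) * dist f g" if f: "f \<in> S" and g: "g \<in> S" for f g
  proof (rule dist_bound)
    fix t
    have "G f t - G g t = integral {t0..cl t} (\<lambda>s. F (apply_bcontfun f s) - F (apply_bcontfun g s))"
      unfolding G_def
      by (subst integral_diff) (auto intro!: integrable_continuous_interval Fcont f g)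
    also have "norm \<dots> \<le> (K * dist f g) * (cl t - t0)"
    proof (rule integral_bound)
      show "cl t \<ge> t0" using cl_in[of t] by auto
      show "continuous_on {t0..cl t} (\<lambda>s. F (apply_bcontfun f s) - F (apply_bcontfun g s))"
        by (intro continuous_intros Fcont f g)
      fix s
      have "norm (F (apply_bcontfun f s) - F (apply_bcontfun g s)) \<le> K * norm (apply_bcontfun f s - apply_bcontfun g s)"
        using f g by (intro FK) (auto simp: S_def)
      also have "\<dots> \<le> K * dist f g"
        using dist_bounded[of f s g] K by (intro mult_left_mono) (auto simp: dist_norm)
      finally show "norm (F (apply_bcontfun f s) - F (apply_bcontfun g s)) \<le> K * dist f g" .
    qed
    also have "\<dots> \<le> (K * dist f g) * d" using cl_in[of t] K by (intro mult_left_mono) auto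
    also have "\<dots> = (d * K) * dist f g" by simp
    also have "\<dots> \<le> (1/2) * dist f g" using d by (intro mult_right_mono) auto
    finally show "dist (apply_bcontfun (T f) t) (apply_bcontfun (T g) t) \<le> (1/2) * dist f g"
      by (simp add: Tapp f g dist_norm)
  qed
  have "complete S" using closedS by (simp add: complete_eq_closed)
  then obtain f where f: "f \<in> S" "T f = f"
    using Banach_fix[of S "1/2" T] const_in TS contr by auto
  have fG: "apply_bcontfun f t = G f t" for t using f Tapp by metis
  show ?thesis
  proof (intro exI conjI ballI)
    show "apply_bcontfun f t0 = x0" using fG[of t0] d by (simp add: G_def cl_def)
    fix t assume t: "t \<in> {t0..t0+d}"
    show "apply_bcontfun f t \<in> cball x0 r" using f by (auto simp: S_def)
    have "((\<lambda>u. integral {t0..u} (\<lambda>s. F (apply_bcontfun f s))) has_vector_derivative F (apply_bcontfun f t)) (at t within {t0..t0+d})"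
      by (rule integral_has_vector_derivative[OF Fcont[OF f(1)] t])
    then have D: "((\<lambda>u. x0 + integral {t0..u} (\<lambda>s. F (apply_bcontfun f s))) has_vector_derivative F (apply_bcontfun f t)) (at t within {t0..t0+d})"
      by (intro derivative_eq_intros) auto
    show "(apply_bcontfun f has_vector_derivative F (apply_bcontfun f t)) (at t within {t0..t0+d})"
    proof (rule has_vector_derivative_transform[OF t _ D])
      fix x assume x: "x \<in> {t0..t0+d}"
      show "apply_bcontfun f x = x0 + integral {t0..x} (\<lambda>s. F (apply_bcontfun f s))"
        using fG[of x] cl_id[OF x] by (simp only: G_def)
    qed
  qed
qed

lemma abs_fst_le: "\<bar>fst z\<bar> \<le> norm (z::real \<times> real)"
  using norm_fst_le[of "fst z" "snd z"] by simp
lemma abs_snd_le: "\<bar>snd z\<bar> \<le> norm (z::real \<times> real)"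
  using norm_snd_le[of "snd z" "fst z"] by simp

definition lip :: "(real \<times> real) set \<Rightarrow> (real \<times> real \<Rightarrow> real) \<Rightarrow> bool" where
  "lip S f \<longleftrightarrow> (\<exists>K. \<forall>x\<in>S. \<forall>y\<in>S. \<bar>f x - f y\<bar> \<le> K * norm (x - y))"
definition bnd :: "(real \<times> real) set \<Rightarrow> (real \<times> real \<Rightarrow> real) \<Rightarrow> bool" where
  "bnd S f \<longleftrightarrow> (\<exists>A. \<forall>x\<in>S. \<bar>f x\<bar> \<le> A)"

lemma lip_const: "lip S (\<lambda>x. c)" unfolding lip_def by (auto intro!: exI[of _ 0])
lemma bnd_const: "bnd S (\<lambda>x. c)" unfolding bnd_def by auto
lemma lip_fst: "lip S (\<lambda>x. fst x)" unfolding lip_def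
proof (intro exI ballI)
  fix x y :: "real \<times> real"
  show "\<bar>fst x - fst y\<bar> \<le> 1 * norm (x - y)" using abs_fst_le[of "x - y"] by simp
qed
lemma lip_snd: "lip S (\<lambda>x. snd x)" unfolding lip_def
proof (intro exI ballI)
  fix x y :: "real \<times> real"
  show "\<bar>snd x - snd y\<bar> \<le> 1 * norm (x - y)" using abs_snd_le[of "x - y"] by simp
qed
lemma bnd_fst: "bounded S \<Longrightarrow> bnd S (\<lambda>x. fst x)" unfolding bnd_def bounded_iff
proof -
  assume "\<exists>a. \<forall>x\<in>S. norm x \<le> a"
  then obtain a where a: "\<forall>x\<in>S. norm x \<le> a" by blast
  have "\<bar>fst x\<bar> \<le> a" if "x \<in> S" for x using abs_fst_le[of x] a that by force
  then show "\<exists>A. \<forall>x\<in>S. \<bar>fst x\<bar> \<le> A" by blast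
qed
lemma bnd_snd: "bounded S \<Longrightarrow> bnd S (\<lambda>x. snd x)" unfolding bnd_def bounded_iff
proof -
  assume "\<exists>a. \<forall>x\<in>S. norm x \<le> a"
  then obtain a where a: "\<forall>x\<in>S. norm x \<le> a" by blast
  have "\<bar>snd x\<bar> \<le> a" if "x \<in> S" for x using abs_snd_le[of x] a that by force
  then show "\<exists>A. \<forall>x\<in>S. \<bar>snd x\<bar> \<le> A" by blast
qed
lemma lip_add: "lip S f \<Longrightarrow> lip S g \<Longrightarrow> lip S (\<lambda>x. f x + g x)"
proof -
  assume "lip S f" "lip S g"
  then obtain K L where K: "\<forall>x\<in>S. \<forall>y\<in>S. \<bar>f x - f y\<bar> \<le> K * norm (x - y)"
    and L: "\<forall>x\<in>S. \<forall>y\<in>S. \<bar>g x - g y\<bar> \<le> L * norm (x - y)" unfolding lip_def by blast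
  show ?thesis unfolding lip_def
  proof (intro exI ballI)
    fix x y assume "x \<in> S" "y \<in> S"
    with K L have "\<bar>f x - f y\<bar> \<le> K * norm (x - y)" "\<bar>g x - g y\<bar> \<le> L * norm (x - y)" by auto
    then show "\<bar>f x + g x - (f y + g y)\<bar> \<le> (K + L) * norm (x - y)"
      using abs_triangle_ineq[of "f x - f y" "g x - g y"] by (simp add: algebra_simps)
  qed
qed
lemma lip_neg: "lip S f \<Longrightarrow> lip S (\<lambda>x. - f x)"
  unfolding lip_def by (simp add: abs_minus_commute)
lemma lip_diff: "lip S f \<Longrightarrow> lip S g \<Longrightarrow> lip S (\<lambda>x. f x - g x)"
  using lip_add[of S f "\<lambda>x. - g x"] lip_neg[of S g] by simp
lemma bnd_add: "bnd S f \<Longrightarrow> bnd S g \<Longrightarrow> bnd S (\<lambda>x. f x + g x)"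
proof -
  assume "bnd S f" "bnd S g"
  then obtain A B where A: "\<forall>x\<in>S. \<bar>f x\<bar> \<le> A" and B: "\<forall>x\<in>S. \<bar>g x\<bar> \<le> B" unfolding bnd_def by blast
  have "\<bar>f x + g x\<bar> \<le> A + B" if "x \<in> S" for x
    using A B that abs_triangle_ineq[of "f x" "g x"] by force
  then show ?thesis unfolding bnd_def by blast
qed
lemma bnd_neg: "bnd S f \<Longrightarrow> bnd S (\<lambda>x. - f x)" unfolding bnd_def by simp
lemma bnd_diff: "bnd S f \<Longrightarrow> bnd S g \<Longrightarrow> bnd S (\<lambda>x. f x - g x)"
  using bnd_add[of S f "\<lambda>x. - g x"] bnd_neg[of S g] by simp
lemma bnd_mult: "bnd S f \<Longrightarrow> bnd S g \<Longrightarrow> bnd S (\<lambda>x. f x * g x)"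
proof -
  assume "bnd S f" "bnd S g"
  then obtain A B where A: "\<forall>x\<in>S. \<bar>f x\<bar> \<le> A" and B: "\<forall>x\<in>S. \<bar>g x\<bar> \<le> B" unfolding bnd_def by blast
  have "\<bar>f x * g x\<bar> \<le> A * B" if "x \<in> S" for x
    unfolding abs_mult using A B that by (intro mult_mono) auto
  then show ?thesis unfolding bnd_def by blast
qed
lemma lip_mult: "lip S f \<Longrightarrow> lip S g \<Longrightarrow> bnd S f \<Longrightarrow> bnd S g \<Longrightarrow> lip S (\<lambda>x. f x * g x)"
proof -
  assume "lip S f" "lip S g" "bnd S f" "bnd S g"
  then obtain K L A B where K: "\<forall>x\<in>S. \<forall>y\<in>S. \<bar>f x - f y\<bar> \<le> K * norm (x - y)"
    and L: "\<forall>x\<in>S. \<forall>y\<in>S. \<bar>g x - g y\<bar> \<le> L * norm (x - y)"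
    and A: "\<forall>x\<in>S. \<bar>f x\<bar> \<le> A" and B: "\<forall>x\<in>S. \<bar>g x\<bar> \<le> B" unfolding lip_def bnd_def by blast
  show ?thesis unfolding lip_def
  proof (intro exI ballI)
    fix x y assume xy: "x \<in> S" "y \<in> S"
    have "f x * g x - f y * g y = f x * (g x - g y) + g y * (f x - f y)" by (simp add: algebra_simps)
    then have "\<bar>f x * g x - f y * g y\<bar> \<le> \<bar>f x\<bar> * \<bar>g x - g y\<bar> + \<bar>g y\<bar> * \<bar>f x - f y\<bar>"
      using abs_triangle_ineq[of "f x * (g x - g y)" "g y * (f x - f y)"] by (simp add: abs_mult)
    also have "\<dots> \<le> A * (L * norm (x - y)) + B * (K * norm (x - y))"
      using xy K L A B by (intro add_mono mult_mono) auto
    finally show "\<bar>f x * g x - f y * g y\<bar> \<le> (A * L + B * K) * norm (x - y)" by (simp add: algebra_simps)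
  qed
qed
lemma lip_inv: assumes "lip S f" "c > 0" "\<forall>x\<in>S. f x \<ge> c" shows "lip S (\<lambda>x. 1 / f x)"
proof -
  obtain K where K: "\<forall>x\<in>S. \<forall>y\<in>S. \<bar>f x - f y\<bar> \<le> K * norm (x - y)" using assms unfolding lip_def by blast
  show ?thesis unfolding lip_def
  proof (intro exI ballI)
    fix x y assume xy: "x \<in> S" "y \<in> S"
    have fx: "f x \<ge> c" "f y \<ge> c" using xy assms by auto
    have "\<bar>1 / f x - 1 / f y\<bar> = \<bar>f y - f x\<bar> / (f x * f y)" using fx assms
      by (simp add: field_simps abs_mult)
    also have "\<dots> \<le> \<bar>f y - f x\<bar> / (c * c)" using fx assms
      by (intro divide_left_mono mult_mono) auto
    also have "\<dots> \<le> (K * norm (x - y)) / (c * c)" using K xy assms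
      by (intro divide_right_mono) (auto simp: abs_minus_commute)
    finally show "\<bar>1 / f x - 1 / f y\<bar> \<le> (K / (c * c)) * norm (x - y)" by simp
  qed
qed
lemma bnd_inv: assumes "c > 0" "\<forall>x\<in>S. f x \<ge> c" shows "bnd S (\<lambda>x. 1 / f x)"
  unfolding bnd_def using assms by (intro exI[of _ "1/c"]) (auto simp: field_simps)

definition Fv :: "real \<times> real \<Rightarrow> real \<times> real" where
  "Fv z = (F2 (fst z) (snd z), F1 (fst z) (snd z))"

lemma F1_alt: "F1 v p = p * (p * ((1 / v - v) * (1/2)) - (1 / v + v) * (1/2))"
  unfolding F1_def Rf_def Qf_def by simp
lemma F2_alt: "F2 v p = (0 - p * (1/4)) * (1 + v * v) + (1 - v * v) * (1/2)"
  unfolding F2_def by (simp add: power2_eq_square)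

lemma ode_exist:
  assumes v0: "v0 > 0"
  shows "\<exists>d>0. \<exists>x. x t0 = (v0, p0) \<and> (\<forall>t\<in>{t0..t0+d}. fst (x t) > 0 \<and>
           (x has_vector_derivative Fv (x t)) (at t within {t0..t0+d}))"
proof -
  define r where "r = v0 / 2"
  define S where "S = cball (v0, p0) r"
  have r: "r > 0" using v0 by (simp add: r_def)
  have bS: "bounded S" by (simp add: S_def)
  have vlow: "\<forall>x\<in>S. fst x \<ge> r"
  proof
    fix x assume "x \<in> S"
    then have "norm ((v0, p0) - x) \<le> r" by (simp add: S_def dist_norm)
    then have "\<bar>v0 - fst x\<bar> \<le> r" using abs_fst_le[of "(v0,p0) - x"] by simp
    then show "fst x \<ge> r" unfolding r_def by linarith
  qed
  note bf = bnd_fst[OF bS] and bs = bnd_snd[OF bS]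
  have li: "lip S (\<lambda>x. 1 / fst x)" by (rule lip_inv[OF lip_fst r vlow])
  have bi: "bnd S (\<lambda>x. 1 / fst x)" by (rule bnd_inv[OF r vlow])
  have l1: "lip S (\<lambda>x. F1 (fst x) (snd x))"
    unfolding F1_alt
    by (intro lip_mult lip_diff lip_snd bnd_mult bnd_diff bs li bi lip_fst bf bnd_const lip_const
        lip_add bnd_add)
  have l2: "lip S (\<lambda>x. F2 (fst x) (snd x))"
    unfolding F2_alt
    by (intro lip_mult lip_diff lip_snd bnd_mult bnd_diff bs li bi lip_fst bf bnd_const lip_const
        lip_add bnd_add)
  obtain K1 where K1: "\<forall>x\<in>S. \<forall>y\<in>S. \<bar>F1 (fst x) (snd x) - F1 (fst y) (snd y)\<bar> \<le> K1 * norm (x - y)"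
    using l1 unfolding lip_def by blast
  obtain K2 where K2: "\<forall>x\<in>S. \<forall>y\<in>S. \<bar>F2 (fst x) (snd x) - F2 (fst y) (snd y)\<bar> \<le> K2 * norm (x - y)"
    using l2 unfolding lip_def by blast
  define K where "K = max 0 (K1 + K2)"
  have K0: "K \<ge> 0" by (simp add: K_def)
  have FK: "norm (Fv x - Fv y) \<le> K * norm (x - y)" if "x \<in> S" "y \<in> S" for x y
  proof -
    have "norm (Fv x - Fv y) = norm ((F2 (fst x) (snd x) - F2 (fst y) (snd y), 0) + (0, F1 (fst x) (snd x) - F1 (fst y) (snd y)))"
      by (simp add: Fv_def)
    also have "\<dots> \<le> \<bar>F2 (fst x) (snd x) - F2 (fst y) (snd y)\<bar> + \<bar>F1 (fst x) (snd x) - F1 (fst y) (snd y)\<bar>"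
      by (rule order_trans[OF norm_triangle_ineq]) (simp add: norm_Pair)
    also have "\<dots> \<le> K2 * norm (x - y) + K1 * norm (x - y)" using K1 K2 that by (intro add_mono) auto
    also have "\<dots> \<le> K * norm (x - y)" unfolding K_def
      by (metis distrib_right max.cobounded2 mult_right_mono norm_ge_zero add.commute)
    finally show ?thesis .
  qed
  define M where "M = norm (Fv (v0, p0)) + K * r"
  have c0: "(v0, p0) \<in> S" using r by (simp add: S_def)
  have FM: "norm (Fv x) \<le> M" if "x \<in> S" for x
  proof -
    have "norm (Fv x) \<le> norm (Fv (v0, p0)) + norm (Fv x - Fv (v0, p0))" by (metis norm_triangle_sub add.commute)
    also have "norm (Fv x - Fv (v0, p0)) \<le> K * norm (x - (v0, p0))" using FK[OF that c0] .
    also have "\<dots> \<le> K * r" using that K0 by (intro mult_left_mono) (auto simp: S_def dist_norm norm_minus_commute)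
    finally show ?thesis by (simp add: M_def)
  qed
  have M0: "M \<ge> 0" using K0 r by (simp add: M_def)
  have Fc: "continuous_on S Fv"
  proof (rule continuous_onI)
    fix x e assume "x \<in> S" "(e::real) > 0"
    show "\<exists>d>0. \<forall>x'\<in>S. dist x' x < d \<longrightarrow> dist (Fv x') (Fv x) \<le> e"
    proof (intro exI[of _ "e / (K + 1)"] conjI ballI impI)
      show "e / (K+1) > 0" using \<open>e > 0\<close> K0 by simp
      fix y assume y: "y \<in> S" "dist y x < e / (K + 1)"
      have "dist (Fv y) (Fv x) \<le> K * dist y x" using FK[OF y(1) \<open>x \<in> S\<close>] by (simp add: dist_norm)
      also have "\<dots> \<le> (K + 1) * dist y x" using K0 by (simp add: mult_right_mono)
      also have "\<dots> \<le> (K + 1) * (e / (K + 1))" using y(2) K0 by (intro mult_left_mono) auto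
      finally show "dist (Fv y) (Fv x) \<le> e" using K0 by simp
    qed
  qed
  define d where "d = min (r / (M + 1)) (1 / (2 * K + 2))"
  have d0: "d > 0" using r M0 K0 by (simp add: d_def)
  have dM: "d * M \<le> r"
  proof -
    have "d * M \<le> (r / (M + 1)) * M" using M0 by (intro mult_right_mono) (auto simp: d_def)
    also have "\<dots> \<le> r" using M0 r by (simp add: field_simps)
    finally show ?thesis .
  qed
  have dK: "d * K \<le> 1/2"
  proof -
    have "d * K \<le> (1 / (2 * K + 2)) * K" using K0 by (intro mult_right_mono) (auto simp: d_def)
    also have "\<dots> \<le> 1/2" using K0 by (simp add: field_simps)
    finally show ?thesis .
  qed
  obtain x where x: "x t0 = (v0, p0)"
    "\<forall>t\<in>{t0..t0+d}. x t \<in> S \<and> (x has_vector_derivative Fv (x t)) (at t within {t0..t0+d})"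
    using picard_local[OF r Fc[unfolded S_def] FM[unfolded S_def] FK[unfolded S_def] d0 dM dK K0, of t0]
    unfolding S_def by blast
  show ?thesis
    using x vlow r by (intro exI[of _ d] conjI d0 exI[of _ x]) force+
qed

lemma mvt_deriv:
  fixes f :: "real \<Rightarrow> real"
  assumes "a < b" "continuous_on {a..b} f"
    and "\<And>x. a < x \<Longrightarrow> x < b \<Longrightarrow> (f has_real_derivative f' x) (at x)"
  shows "\<exists>z. a < z \<and> z < b \<and> f b - f a = (b - a) * f' z"
proof -
  obtain l z where z: "a < z" "z < b" "DERIV f z :> l" "f b - f a = (b - a) * l"
    using MVT[OF assms(1,2)] assms(3) real_differentiable_def by blast
  have "l = f' z" using DERIV_unique[OF z(3) assms(3)[OF z(1,2)]] .
  then show ?thesis using z by blast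
qed

lemma deriv_nonpos_mono:
  fixes f :: "real \<Rightarrow> real"
  assumes "a \<le> b" "continuous_on {a..b} f"
    and "\<And>x. a < x \<Longrightarrow> x < b \<Longrightarrow> (f has_real_derivative f' x) (at x) \<and> f' x \<le> 0"
  shows "f b \<le> f a"
proof (cases "a = b")
  case False
  then have "a < b" using assms by simp
  from mvt_deriv[OF this assms(2), of f'] assms(3) obtain z where
    "a < z" "z < b" "f b - f a = (b - a) * f' z" by blast
  moreover have "f' z \<le> 0" using assms(3) calculation by blast
  moreover have "(b - a) * f' z \<le> 0" using \<open>a < b\<close> calculation(4) by (intro mult_nonneg_nonpos) auto
  ultimately show ?thesis by linarith
qed simp

lemma deriv_nonneg_mono:
  fixes f :: "real \<Rightarrow> real"
  assumes "a \<le> b" "continuous_on {a..b} f"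
    and "\<And>x. a < x \<Longrightarrow> x < b \<Longrightarrow> (f has_real_derivative f' x) (at x) \<and> f' x \<ge> 0"
  shows "f a \<le> f b"
proof -
  have "(\<lambda>x. - f x) b \<le> (\<lambda>x. - f x) a"
    by (rule deriv_nonpos_mono[OF assms(1), of _ "\<lambda>x. - f' x"])
       (use assms in \<open>auto intro!: continuous_intros derivative_eq_intros\<close>)
  then show ?thesis by simp
qed

locale ctx =
  fixes v p :: "real \<Rightarrow> real" and b :: ereal
  assumes sol: "is_sol v p b" and init: "(v 0, p 0) \<in> Omega_b"
begin

definition I where "I = {s. 0 \<le> s \<and> ereal s < b}"
definition Ht where "Ht t = Hf (v t) (p t)"
definition W where "W t = exp (mu * t) * (1 / p t + lam / mu)"

lemma b_pos: "0 < b" using sol by (simp add: is_sol_def)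
lemma I0: "0 \<in> I" using b_pos by (simp add: I_def zero_ereal_def)

lemma derivs:
  assumes "t \<in> I"
  shows "v t \<noteq> 0" "(p has_real_derivative F1 (v t) (p t)) (at t within I)"
        "(v has_real_derivative F2 (v t) (p t)) (at t within I)"
  using sol assms unfolding is_sol_def I_def F1_def F2_def by auto

lemma I_down: "t \<in> I \<Longrightarrow> 0 \<le> s \<Longrightarrow> s \<le> t \<Longrightarrow> s \<in> I"
proof -
  assume a: "t \<in> I" "0 \<le> s" "s \<le> t"
  then have "ereal s \<le> ereal t" by simp
  also have "ereal t < b" using a by (simp add: I_def)
  finally show "s \<in> I" using a by (simp add: I_def)
qed

lemma Icc_sub: "0 \<le> s \<Longrightarrow> t \<in> I \<Longrightarrow> {s..t} \<subseteq> I"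
  using I_down by auto

lemma at_int:
  assumes "t \<in> I" "0 < t"
  shows "at t within I = at t"
proof -
  have "ereal t < b" using assms by (simp add: I_def)
  then obtain z where z: "ereal t < ereal z" "ereal z < b" using ereal_dense2 by blast
  have "{0<..<z} \<subseteq> I"
  proof
    fix s assume s: "s \<in> {0<..<z}"
    then have "ereal s < ereal z" by simp
    then have "ereal s < b" using z(2) by (rule less_trans)
    then show "s \<in> I" using s by (simp add: I_def)
  qed
  moreover have "t \<in> {0<..<z}" using assms z by simp
  ultimately show ?thesis
    by (intro at_within_open_subset[of t "{0<..<z}"]) auto
qed

lemma derivs_at:
  assumes "t \<in> I" "0 < t"
  shows "(p has_real_derivative F1 (v t) (p t)) (at t)"
        "(v has_real_derivative F2 (v t) (p t)) (at t)"
  using derivs[OF assms(1)] at_int[OF assms] by auto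

lemma contv: "continuous_on I v" using derivs(3) by (rule DERIV_continuous_on)
lemma contp: "continuous_on I p" using derivs(2) by (rule DERIV_continuous_on)

lemma init_facts: "0 < v 0" "v 0 < sqrt (1 - 2 * lam)" "p 0 \<ge> p_b (v 0)"
  using init by (auto simp: Omega_b_def)

lemma v_pos: assumes "t \<in> I" shows "v t > 0"
proof (rule ccontr)
  assume "\<not> v t > 0"
  then have "v t \<le> 0" by simp
  have "0 \<le> t" using assms by (simp add: I_def)
  have "continuous_on {0..t} v" using contv Icc_sub[OF order_refl assms] continuous_on_subset by blast
  then obtain x where "0 \<le> x" "x \<le> t" "v x = 0"
    using IVT2'[of v t 0 0] \<open>v t \<le> 0\<close> init_facts(1) \<open>0 \<le> t\<close> by auto
  then show False using derivs(1)[OF I_down[OF assms]] by auto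
qed

end

context ctx begin

lemma H_deriv:
  assumes "t \<in> I"
  shows "(Ht has_real_derivative dHf (v t) (p t)) (at t within I)"
proof -
  note d = derivs[OF assms]
  have "((\<lambda>s. p s * (1 - (v s)^2 - 2 * lam * v s) - (1 + (v s)^2 + 2 * mu * v s)) has_real_derivative
      F1 (v t) (p t) * (1 - (v t)^2 - 2 * lam * v t) + p t * (- (2 * v t * F2 (v t) (p t)) - 2 * lam * F2 (v t) (p t))
       - (2 * v t * F2 (v t) (p t) + 2 * mu * F2 (v t) (p t))) (at t within I)"
    by (auto intro!: derivative_eq_intros d(2,3))
  then show ?thesis unfolding Ht_def Hf_def dfn_def nfn_def
    by (rule DERIV_cong) (simp add: dHf_def dfn_def algebra_simps)
qed

lemma init_good: "p 0 > 0 \<and> Ht 0 \<ge> 0"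
proof -
  define v0 where "v0 = v 0"
  have v0: "0 < v0" "v0 < sqrt (1 - 2 * lam)" using init_facts by (auto simp: v0_def)
  have "v0^2 < (sqrt (1 - 2 * lam))^2" using v0 by (intro power_strict_mono) auto
  then have v02: "v0^2 < 49/50" by (simp add: lam_def)
  have "v0 < 1"
  proof (rule ccontr)
    assume "\<not> v0 < 1" then have "1 \<le> v0^2" by (simp add: one_le_power)
    then show False using v02 by simp
  qed
  have dpos: "dfn v0 > 0" unfolding dfn_def lam_def using v02 \<open>v0 < 1\<close> by simp
  have npos: "nfn v0 > 0" unfolding nfn_def mu_def using v0 by (simp add: add_pos_pos)
  have q: "Qf v0 + mu = nfn v0 / (2 * v0)" using v0 by (simp add: Qf_def nfn_def field_simps power2_eq_square)
  have r: "Rf v0 - lam = dfn v0 / (2 * v0)" using v0 by (simp add: Rf_def dfn_def field_simps power2_eq_square)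
  have "p_b v0 = nfn v0 / dfn v0"
    unfolding p_b_def q r using v0 dpos by (simp add: field_simps)
  then have pb: "p 0 \<ge> nfn v0 / dfn v0" using init_facts by (simp add: v0_def)
  then have "p 0 * dfn v0 \<ge> nfn v0" using dpos by (simp add: field_simps)
  moreover have "p 0 > 0" using pb npos dpos by (meson divide_pos_pos less_le_trans)
  ultimately show ?thesis by (simp add: Ht_def Hf_def v0_def)
qed

lemma cont_at_within: "t \<in> I \<Longrightarrow> (p \<longlongrightarrow> p t) (at t within I)" "t \<in> I \<Longrightarrow> (Ht \<longlongrightarrow> Ht t) (at t within I)"
  "t \<in> I \<Longrightarrow> (v \<longlongrightarrow> v t) (at t within I)"
  using DERIV_continuous[OF derivs(2)] DERIV_continuous[OF H_deriv] DERIV_continuous[OF derivs(3)]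
  by (auto simp: continuous_within)

lemma right_good:
  assumes t: "t \<in> I" and pt: "p t > 0" and Hn: "Ht t \<ge> 0"
  shows "eventually (\<lambda>s. t < s \<longrightarrow> Ht s > 0 \<and> p s > 0) (at t within I)"
proof -
  have ep: "eventually (\<lambda>s. p s > 0) (at t within I)"
    using order_tendstoD(1)[OF cont_at_within(1)[OF t] pt] .
  have eH: "eventually (\<lambda>s. t < s \<longrightarrow> Ht s > 0) (at t within I)"
  proof (cases "Ht t > 0")
    case True
    show ?thesis using order_tendstoD(1)[OF cont_at_within(2)[OF t] True] by (rule eventually_mono) simp
  next
    case False
    then have H0: "Ht t = 0" using Hn by simp
    have "dHf (v t) (p t) > 0" using key_pos[OF v_pos[OF t] pt] H0 by (simp add: Ht_def)
    moreover have "((\<lambda>y. (Ht y - Ht t) / (y - t)) \<longlongrightarrow> dHf (v t) (p t)) (at t within I)"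
      using H_deriv[OF t] by (simp add: has_field_derivative_iff)
    ultimately have "eventually (\<lambda>y. (Ht y - Ht t) / (y - t) > 0) (at t within I)"
      by (intro order_tendstoD(1)) auto
    then show ?thesis
    proof (rule eventually_mono)
      fix y assume "(Ht y - Ht t) / (y - t) > 0"
      then show "t < y \<longrightarrow> Ht y > 0" using H0 by (auto simp: zero_less_divide_iff)
    qed
  qed
  show ?thesis using ep eH by eventually_elim auto
qed

lemma good:
  assumes t: "t \<in> I"
  shows "p t > 0 \<and> Ht t \<ge> 0"
proof (rule ccontr)
  assume nt: "\<not> (p t > 0 \<and> Ht t \<ge> 0)"
  define B where "B = {s \<in> I. \<not> (p s > 0 \<and> Ht s \<ge> 0)}"
  have tB: "t \<in> B" using t nt by (simp add: B_def)
  have bdd: "bdd_below B" unfolding B_def I_def by (rule bdd_belowI[of _ 0]) auto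
  define \<tau> where "\<tau> = Inf B"
  have tau_le: "\<tau> \<le> s" if "s \<in> B" for s using cInf_lower[OF that bdd] by (simp add: \<tau>_def)
  have tau0: "0 \<le> \<tau>" unfolding \<tau>_def using tB by (intro cInf_greatest) (auto simp: B_def I_def)
  have tauI: "\<tau> \<in> I" using I_down[OF t tau0 tau_le[OF tB]] .
  have below: "p s > 0 \<and> Ht s \<ge> 0" if "s \<in> I" "s < \<tau>" for s
    using that tau_le[of s] by (auto simp: B_def)
  have gtau: "p \<tau> > 0 \<and> Ht \<tau> \<ge> 0"
  proof (cases "\<tau> = 0")
    case True then show ?thesis using init_good by simp
  next
    case False
    then have tpos: "\<tau> > 0" using tau0 by simp
    have ev: "eventually (\<lambda>s. p s > 0 \<and> Ht s \<ge> 0) (at_left \<tau>)"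
    proof -
      have "eventually (\<lambda>s. s \<in> {0<..<\<tau>}) (at_left \<tau>)" using eventually_at_left_real[OF tpos] .
      then show ?thesis
        by (rule eventually_mono) (auto intro!: below I_down[OF tauI])
    qed
    have atl: "at_left \<tau> \<le> at \<tau> within I" 
      using at_int[OF tauI tpos] by (simp add: at_le)
    have lp: "(p \<longlongrightarrow> p \<tau>) (at_left \<tau>)" using cont_at_within(1)[OF tauI] atl by (rule tendsto_mono[rotated])
    have lH: "(Ht \<longlongrightarrow> Ht \<tau>) (at_left \<tau>)" using cont_at_within(2)[OF tauI] atl by (rule tendsto_mono[rotated])
    have "Ht \<tau> \<ge> 0" by (rule tendsto_lowerbound[OF lH]) (use ev in \<open>auto elim: eventually_mono\<close>)
    moreover have "p \<tau> \<ge> 0" by (rule tendsto_lowerbound[OF lp]) (use ev in \<open>auto elim: eventually_mono\<close>)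
    moreover have "p \<tau> \<noteq> 0"
    proof
      assume "p \<tau> = 0"
      then have "Ht \<tau> = - nfn (v \<tau>)" by (simp add: Ht_def Hf_def)
      moreover have "nfn (v \<tau>) > 0" using v_pos[OF tauI] unfolding nfn_def mu_def by (simp add: add_pos_pos)
      ultimately show False using \<open>Ht \<tau> \<ge> 0\<close> by simp
    qed
    ultimately show ?thesis by simp
  qed
  from right_good[OF tauI] gtau obtain d where d: "d > 0"
    and dd: "\<forall>s\<in>I. s \<noteq> \<tau> \<and> dist s \<tau> < d \<longrightarrow> (\<tau> < s \<longrightarrow> Ht s > 0 \<and> p s > 0)"
    unfolding eventually_at by blast
  have "\<tau> + d \<le> Inf B"
  proof (rule cInf_greatest)
    show "B \<noteq> {}" using tB by blast
    fix x assume xB: "x \<in> B"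
    have "\<tau> \<le> x" using tau_le[OF xB] .
    moreover have "x \<noteq> \<tau>" using xB gtau by (auto simp: B_def)
    moreover have "x \<in> I" using xB by (simp add: B_def)
    ultimately show "\<tau> + d \<le> x" using dd xB by (force simp: B_def dist_real_def)
  qed
  then show False using d by (simp add: \<tau>_def)
qed

lemma p_pos: "t \<in> I \<Longrightarrow> p t > 0" using good by blast
lemma H_nn: "t \<in> I \<Longrightarrow> Ht t \<ge> 0" using good by blast

lemma dfn_pos: assumes "t \<in> I" shows "dfn (v t) > 0"
proof -
  have "p t * dfn (v t) \<ge> nfn (v t)" using H_nn[OF assms] by (simp add: Ht_def Hf_def)
  moreover have "nfn (v t) > 0" using v_pos[OF assms] unfolding nfn_def mu_def by (simp add: add_pos_pos)
  ultimately show ?thesis using p_pos[OF assms] by (metis not_le order_less_le_trans zero_less_mult_pos)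
qed

lemma v_lt1: assumes "t \<in> I" shows "v t < 1"
proof (rule ccontr)
  assume "\<not> v t < 1" then have "(v t)^2 \<ge> 1" by (simp add: one_le_power)
  then show False using dfn_pos[OF assms] v_pos[OF assms] unfolding dfn_def lam_def by simp
qed

lemma F1_pos: assumes "t \<in> I" shows "F1 (v t) (p t) > 0"
proof -
  have "lam * p t + mu + Ht t / (2 * v t) > 0"
    using p_pos[OF assms] H_nn[OF assms] v_pos[OF assms] unfolding lam_def mu_def
    by (simp add: add_pos_nonneg)
  then show ?thesis using F1_eq[of "v t" "p t"] v_pos[OF assms] p_pos[OF assms]
    by (simp add: Ht_def)
qed

end

context ctx begin

lemma W_deriv:
  assumes t: "t \<in> I" "0 < t"
  shows "(W has_real_derivative - exp (mu * t) * Ht t / (2 * v t * p t)) (at t)"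
proof -
  have pt: "p t \<noteq> 0" using p_pos[OF t(1)] by simp
  have vt: "v t \<noteq> 0" using v_pos[OF t(1)] by simp
  have "(W has_real_derivative mu * exp (mu * t) * (1 / p t + lam / mu) + exp (mu * t) * (- F1 (v t) (p t) / (p t)^2)) (at t)"
    unfolding W_def using pt
    by (auto intro!: derivative_eq_intros derivs_at(1)[OF t] simp: power2_eq_square field_simps)
  moreover have "mu * exp (mu * t) * (1 / p t + lam / mu) + exp (mu * t) * (- F1 (v t) (p t) / (p t)^2)
      = - exp (mu * t) * Ht t / (2 * v t * p t)"
    unfolding F1_eq[OF vt] Ht_def using pt vt by (simp add: field_simps power2_eq_square mu_def)
  ultimately show ?thesis by simp
qed

lemma W_deriv_nonpos: "t \<in> I \<Longrightarrow> - exp (mu * t) * Ht t / (2 * v t * p t) \<le> 0"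
  using H_nn[of t] v_pos[of t] p_pos[of t] by (simp add: divide_nonneg_pos)

lemma W_deriv_neg: "t \<in> I \<Longrightarrow> Ht t > 0 \<Longrightarrow> - exp (mu * t) * Ht t / (2 * v t * p t) < 0"
  using v_pos[of t] p_pos[of t] by (simp add: divide_pos_pos)

lemma W_cont: "continuous_on I W"
  unfolding W_def using p_pos by (auto intro!: continuous_intros contp) (metis less_irrefl)

lemma W_nonincr:
  assumes "s \<in> I" "t \<in> I" "s \<le> t"
  shows "W t \<le> W s"
proof (rule deriv_nonpos_mono[OF assms(3)])
  have "0 \<le> s" using assms by (simp add: I_def)
  then show "continuous_on {s..t} W" using W_cont Icc_sub assms(2) continuous_on_subset by blast
  fix x assume x: "s < x" "x < t"
  have "0 \<le> s" using assms by (simp add: I_def)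
  then have xI: "x \<in> I" "0 < x" using I_down[OF assms(2), of x] x by auto
  show "(W has_real_derivative - exp (mu * x) * Ht x / (2 * v x * p x)) (at x) \<and>
      - exp (mu * x) * Ht x / (2 * v x * p x) \<le> 0"
    using W_deriv[OF xI] W_deriv_nonpos[OF xI(1)] by simp
qed

lemma W_strict:
  assumes t: "t \<in> I" "0 < t"
  shows "W t < W 0"
proof -
  from right_good[OF I0] init_good obtain d where d: "d > 0"
    and dd: "\<forall>s\<in>I. s \<noteq> 0 \<and> dist s 0 < d \<longrightarrow> (0 < s \<longrightarrow> Ht s > 0 \<and> p s > 0)"
    unfolding eventually_at by blast
  define s where "s = min t (d / 2)"
  have s: "0 < s" "s \<le> t" using t d by (auto simp: s_def)
  have sI: "s \<in> I" using I_down[OF t(1)] s by simp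
  have "continuous_on {0..s} W" using W_cont Icc_sub[OF order_refl sI] continuous_on_subset by blast
  then obtain z where z: "0 < z" "z < s" "W s - W 0 = (s - 0) * (- exp (mu * z) * Ht z / (2 * v z * p z))"
    using mvt_deriv[OF s(1), of W "\<lambda>x. - exp (mu * x) * Ht x / (2 * v x * p x)"]
      W_deriv I_down[OF sI] by force
  have zI: "z \<in> I" using I_down[OF sI, of z] z by simp
  have "Ht z > 0" using dd zI z d by (auto simp: s_def dist_real_def)
  then have "(s - 0) * (- exp (mu * z) * Ht z / (2 * v z * p z)) < 0" using W_deriv_neg[OF zI] s
    by (intro mult_pos_neg) auto
  then have "W s - W 0 < 0" using z(3) by simp
  moreover have "W t \<le> W s" using W_nonincr[OF sI t(1) s(2)] .
  ultimately show ?thesis by simp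
qed

lemma W_lower: "t \<in> I \<Longrightarrow> lam / mu * exp (mu * t) < W t"
  using p_pos[of t] unfolding W_def by (simp add: algebra_simps lam_def mu_def)

lemma W0: "W 0 = 1 / p 0 + lam / mu" by (simp add: W_def)

lemma concl1:
  defines "D \<equiv> p 0 / (lam * p 0 + mu)"
  assumes t: "0 < t" "ereal t < b"
  shows "p t > mu * D * exp (mu * t) / (1 - lam * D * exp (mu * t))"
proof -
  have tI: "t \<in> I" using t by (simp add: I_def)
  define e where "e = exp (mu * t)"
  define q where "q = 1 / p t"
  have p0: "p 0 > 0" using init_good by simp
  have e: "e > 0" by (simp add: e_def)
  have q: "q > 0" "q * p t = 1" using p_pos[OF tI] by (auto simp: q_def)
  have D: "D > 0" using p0 by (simp add: D_def lam_def mu_def)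
  have WD: "W 0 = 1 / (mu * D)" using p0 by (simp add: W0 D_def field_simps lam_def mu_def)
  have "e * (q + lam / mu) < 1 / (mu * D)" using W_strict[OF tI t(1)] WD by (simp add: W_def e_def q_def)
  then have "(mu * D) * (e * (q + lam / mu)) < (mu * D) * (1 / (mu * D))"
    using D by (intro mult_strict_left_mono) (auto simp: mu_def)
  then have key: "mu * D * e * q + lam * D * e < 1" using D by (simp add: field_simps mu_def)
  have pos: "mu * D * e * q > 0" using D e q by (simp add: mu_def)
  have den: "1 - lam * D * e > 0" using key pos by linarith
  have "mu * D * e * q * p t < (1 - lam * D * e) * p t"
    using key p_pos[OF tI] by (intro mult_strict_right_mono) auto
  then have "mu * D * e < (1 - lam * D * e) * p t" using q(2) by (simp add: mult.assoc)
  then show ?thesis using den by (simp add: e_def pos_divide_less_eq mult.commute)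
qed

lemma finite_b:
  defines "D \<equiv> p 0 / (lam * p 0 + mu)"
  shows "\<exists>tc. b = ereal tc \<and> 0 < tc \<and> tc < - ln (lam * D) / mu"
proof -
  obtain t1 where t1: "0 < ereal t1" "ereal t1 < b" using ereal_dense2[OF b_pos] by blast
  have t1I: "t1 \<in> I" "0 < t1" using t1 by (auto simp: I_def)
  define T1 where "T1 = ln (mu * W t1 / lam) / mu"
  have Wt1: "lam / mu * exp (mu * t1) < W t1" using W_lower[OF t1I(1)] .
  have Wpos: "W t1 > 0" using Wt1 by (smt (verit) divide_pos_pos exp_gt_zero lam_def mu_def mult_pos_pos)
  have bound: "t < T1" if "t \<in> I" "t1 \<le> t" for t
  proof -
    have "lam / mu * exp (mu * t) < W t1" using W_lower[OF that(1)] W_nonincr[OF t1I(1) that(1,2)] by linarith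
    then have "exp (mu * t) < mu * W t1 / lam" by (simp add: field_simps lam_def mu_def)
    then have "mu * t < ln (mu * W t1 / lam)" using Wpos by (metis exp_less_cancel_iff exp_ln divide_pos_pos mult_pos_pos lam_def mu_def zero_less_divide_iff zero_less_numeral zero_less_one)
    then show ?thesis by (simp add: T1_def field_simps mu_def)
  qed
  have t1T1: "t1 < T1" using bound[OF t1I(1) order_refl] .
  have allT1: "t < T1" if "t \<in> I" for t
    using bound[OF that] t1T1 by (cases "t1 \<le> t") auto
  have "b \<le> ereal T1"
  proof (rule ccontr)
    assume "\<not> b \<le> ereal T1"
    then obtain z where z: "ereal T1 < ereal z" "ereal z < b" using ereal_dense2 by (metis not_le)
    have "0 \<le> z" using z t1T1 t1I by simp
    then have "z \<in> I" using z by (simp add: I_def)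
    then show False using allT1 z by force
  qed
  then obtain tc where tc: "b = ereal tc" using b_pos by (cases b) auto
  have "0 < tc" using b_pos tc by (simp add: zero_ereal_def)
  have "tc \<le> T1" using \<open>b \<le> ereal T1\<close> tc by simp
  have p0: "p 0 > 0" using init_good by simp
  have D: "D > 0" using p0 by (simp add: D_def lam_def mu_def)
  have "W t1 < W 0" by (rule W_strict[OF t1I])
  moreover have "W 0 = 1 / (mu * D)" using p0 by (simp add: W0 D_def field_simps lam_def mu_def)
  ultimately have "mu * W t1 / lam < 1 / (lam * D)" using D by (simp add: field_simps lam_def mu_def)
  then have "ln (mu * W t1 / lam) < ln (1 / (lam * D))" using Wpos D
    by (intro ln_less_cancel_iff[THEN iffD2]) (auto simp: lam_def mu_def)
  then have "T1 < - ln (lam * D) / mu" using D by (simp add: T1_def ln_div lam_def mu_def field_simps)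
  then show ?thesis using tc \<open>0 < tc\<close> \<open>tc \<le> T1\<close> by auto
qed

end

lemma mono_lim:
  fixes f :: "real \<Rightarrow> real"
  assumes ac: "a < c" and mono: "\<And>x y. a \<le> x \<Longrightarrow> x \<le> y \<Longrightarrow> y < c \<Longrightarrow> f x \<le> f y"
    and bd: "\<And>x. a \<le> x \<Longrightarrow> x < c \<Longrightarrow> f x \<le> B"
  shows "(f \<longlongrightarrow> Sup (f ` {a..<c})) (at_left c)"
proof -
  have ne: "f ` {a..<c} \<noteq> {}" using ac by auto
  have bdd: "bdd_above (f ` {a..<c})" using bd by (auto intro!: bdd_aboveI)
  show ?thesis
  proof (rule order_tendstoI)
    fix y assume "y < Sup (f ` {a..<c})"
    then obtain x0 where x0: "x0 \<in> {a..<c}" "y < f x0" using less_cSup_iff[OF ne bdd] by auto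
    have "eventually (\<lambda>s. s \<in> {x0<..<c}) (at_left c)" using x0 by (intro eventually_at_left_real) auto
    then show "eventually (\<lambda>s. y < f s) (at_left c)"
    proof (rule eventually_mono)
      fix s assume "s \<in> {x0<..<c}"
      then have "f x0 \<le> f s" using x0 by (intro mono) auto
      then show "y < f s" using x0 by simp
    qed
  next
    fix y assume y: "Sup (f ` {a..<c}) < y"
    have "eventually (\<lambda>s. s \<in> {a<..<c}) (at_left c)" using ac by (intro eventually_at_left_real) auto
    then show "eventually (\<lambda>s. f s < y) (at_left c)"
    proof (rule eventually_mono)
      fix s assume "s \<in> {a<..<c}"
      then have "f s \<le> Sup (f ` {a..<c})" using bdd by (intro cSup_upper) auto
      then show "f s < y" using y by simp
    qed
  qed
qed

context ctx begin

lemma p_mono: assumes "s \<in> I" "t \<in> I" "s \<le> t" shows "p s \<le> p t"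
proof (rule deriv_nonneg_mono[OF assms(3)])
  have "0 \<le> s" using assms by (simp add: I_def)
  then show "continuous_on {s..t} p" using contp Icc_sub assms(2) continuous_on_subset by blast
  fix x assume x: "s < x" "x < t"
  have "0 \<le> s" using assms by (simp add: I_def)
  then have xI: "x \<in> I" "0 < x" using I_down[OF assms(2), of x] x by auto
  show "(p has_real_derivative F1 (v x) (p x)) (at x) \<and> F1 (v x) (p x) \<ge> 0"
    using derivs_at(1)[OF xI] F1_pos[OF xI(1)] by simp
qed

lemma lims:
  assumes tc: "b = ereal tc" and L0: "\<And>t. t \<in> I \<Longrightarrow> p t \<le> L0"
  shows "\<exists>vb L. vb > 0 \<and> (v \<longlongrightarrow> vb) (at_left tc) \<and> (p \<longlongrightarrow> L) (at_left tc)"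
proof -
  have Ieq: "I = {0..<tc}"
  proof -
    have "I = {s. 0 \<le> s \<and> ereal s < b}" by (rule I_def)
    also have "\<dots> = {0..<tc}" using tc by auto
    finally show ?thesis .
  qed
  have tc0: "0 < tc" using b_pos tc by (simp add: zero_ereal_def)
  have inI: "x \<in> I \<longleftrightarrow> 0 \<le> x \<and> x < tc" for x using Ieq by auto
  have plim: "(p \<longlongrightarrow> Sup (p ` {0..<tc})) (at_left tc)"
    by (rule mono_lim[OF tc0, of p L0]) (auto intro: p_mono L0 simp: inI)
  have p0: "p 0 > 0" using init_good by simp
  define K where "K = L0 / 2 + 1"
  have L0p: "L0 \<ge> p 0" using L0 I0 by simp
  have K: "K > 0" using L0p p0 by (simp add: K_def)
  have F2b: "F2 (v t) (p t) + K \<ge> 0" if "t \<in> I" for t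
  proof -
    have "(v t)^2 < 1" using v_pos[OF that] v_lt1[OF that] by (simp add: power_less_one_iff abs_less_iff)
    moreover have "p t \<le> L0" "p t > 0" using L0 p_pos that by auto
    ultimately have "p t / 4 * (1 + (v t)^2) \<le> L0 / 4 * 2"
      by (intro mult_mono) auto
    moreover have "(1 - (v t)^2) / 2 \<ge> 0" using \<open>(v t)^2 < 1\<close> by simp
    ultimately show ?thesis unfolding F2_def K_def by linarith
  qed
  define g where "g t = v t + K * t" for t
  have g_mono: "g s \<le> g t" if "s \<in> I" "t \<in> I" "s \<le> t" for s t
  proof (rule deriv_nonneg_mono[OF that(3), of g "\<lambda>x. F2 (v x) (p x) + K"])
    have "0 \<le> s" using that by (simp add: I_def)
    then have "continuous_on {s..t} v" using contv Icc_sub that(2) continuous_on_subset by blast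
    then show "continuous_on {s..t} g" unfolding g_def by (intro continuous_intros)
    fix x assume x: "s < x" "x < t"
    have "0 \<le> s" using that by (simp add: I_def)
    then have xI: "x \<in> I" "0 < x" using I_down[OF that(2), of x] x by auto
    show "(g has_real_derivative F2 (v x) (p x) + K) (at x) \<and> F2 (v x) (p x) + K \<ge> 0"
      unfolding g_def using F2b[OF xI(1)] by (auto intro!: derivative_eq_intros derivs_at(2)[OF xI])
  qed
  have g_bd: "g t \<le> 1 + K * tc" if "t \<in> I" for t
    using v_lt1[OF that] K that by (simp add: g_def inI mult_left_mono add_mono)
  have glim: "(g \<longlongrightarrow> Sup (g ` {0..<tc})) (at_left tc)"
    by (rule mono_lim[OF tc0, of g "1 + K * tc"]) (auto intro: g_mono g_bd simp: inI)
  define vb where "vb = Sup (g ` {0..<tc}) - K * tc"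
  have vlim0: "((\<lambda>t. g t - K * t) \<longlongrightarrow> vb) (at_left tc)"
    unfolding vb_def by (intro tendsto_intros glim)
  have vlim: "(v \<longlongrightarrow> vb) (at_left tc)"
    using vlim0 by (simp add: g_def)
  have ev0: "eventually (\<lambda>t. t \<in> {0<..<tc}) (at_left tc)" using tc0 by (intro eventually_at_left_real)
  have vb0: "vb \<ge> 0"
  proof (rule tendsto_lowerbound[OF vlim])
    show "eventually (\<lambda>t. 0 \<le> v t) (at_left tc)" using ev0
    proof (rule eventually_mono)
      fix t assume "t \<in> {0<..<tc}"
      then have "t \<in> I" by (simp add: inI)
      then show "0 \<le> v t" using v_pos less_imp_le by blast
    qed
  qed simp
  have vbpos: "vb > 0"
  proof (rule ccontr)
    assume "\<not> vb > 0"
    then have vb00: "vb = 0" using vb0 by simp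
    have vle: "v t \<le> K * (tc - t)" if tI: "t \<in> I" for t
    proof -
      have ev: "eventually (\<lambda>s. g t \<le> g s) (at_left tc)"
      proof -
        have "t < tc" using tI by (simp add: inI)
        then have "eventually (\<lambda>s. s \<in> {t<..<tc}) (at_left tc)" by (intro eventually_at_left_real)
        then show ?thesis by (rule eventually_mono) (use tI in \<open>auto intro!: g_mono simp: inI\<close>)
      qed
      have "g t \<le> Sup (g ` {0..<tc})" by (rule tendsto_lowerbound[OF glim ev]) simp
      then show ?thesis using vb00 by (simp add: g_def vb_def algebra_simps)
    qed
    have p01: "p 0 > 1"
    proof -
      have "p 0 * dfn (v 0) \<ge> nfn (v 0)" using H_nn[OF I0] by (simp add: Ht_def Hf_def)
      moreover have "nfn (v 0) > dfn (v 0)"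
      proof -
        have a: "0 \<le> (v 0)^2" by simp
        have b: "0 < v 0" using v_pos[OF I0] .
        show ?thesis unfolding nfn_def dfn_def lam_def mu_def using a b by linarith
      qed
      moreover have "dfn (v 0) > 0" using dfn_pos[OF I0] .
      ultimately have "dfn (v 0) < p 0 * dfn (v 0)" by linarith
      then show ?thesis using \<open>dfn (v 0) > 0\<close> by (simp add: mult_less_cancel_right1)
    qed
    define c0 where "c0 = (p 0 - 1) / 2"
    have c0: "c0 > 0" using p01 by (simp add: c0_def)
    define e0 where "e0 = c0 / (p 0 + 1)"
    have e0: "e0 > 0" using c0 p0 by (simp add: e0_def)
    have "((\<lambda>t. (v t)^2) \<longlongrightarrow> 0) (at_left tc)" using vlim vb00 by (auto intro: tendsto_eq_intros)
    then have eve: "eventually (\<lambda>t. (v t)^2 < e0) (at_left tc)" using e0 by (intro order_tendstoD(2)) auto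
    define C where "C = p 0 * c0 / (2 * K)"
    have C: "C > 0" using p0 c0 K by (simp add: C_def)
    have F1low: "F1 (v t) (p t) \<ge> C / (tc - t)" if tI: "t \<in> I" and te: "(v t)^2 < e0" and t0: "0 < t" for t
    proof -
      have vt: "v t > 0" using v_pos[OF tI] .
      have vt1: "(v t)^2 < 1" using vt v_lt1[OF tI] by (simp add: power_less_one_iff abs_less_iff)
      have pt: "p t \<ge> p 0" using p_mono[OF I0 tI] t0 by simp
      have F1e: "F1 (v t) (p t) = p t * ((p t * (1 - (v t)^2) - (1 + (v t)^2)) / (2 * v t))"
        unfolding F1_def Rf_def Qf_def using vt by (simp add: field_simps power2_eq_square)
      have A: "p t * (1 - (v t)^2) \<ge> p 0 * (1 - (v t)^2)" using pt vt1 by (intro mult_right_mono) auto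
      have B: "(v t)^2 * (p 0 + 1) \<le> c0"
        using te p0 by (simp add: e0_def pos_less_divide_eq less_imp_le mult.commute)
      have "p 0 * (1 - (v t)^2) - (1 + (v t)^2) = 2 * c0 - (v t)^2 * (p 0 + 1)"
        unfolding c0_def by (simp add: algebra_simps)
      then have num: "p t * (1 - (v t)^2) - (1 + (v t)^2) \<ge> c0"
        using A B by linarith
      have vK: "v t \<le> K * (tc - t)" using vle[OF tI] .
      have tct: "tc - t > 0" using tI by (simp add: inI)
      have "C / (tc - t) = p 0 * c0 / (2 * (K * (tc - t)))" by (simp add: C_def)
      also have "\<dots> \<le> p 0 * c0 / (2 * v t)"
        using vK vt p0 c0 K tct by (intro divide_left_mono mult_left_mono) auto
      also have "\<dots> = p 0 * (c0 / (2 * v t))" by simp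
      also have "\<dots> \<le> p t * ((p t * (1 - (v t)^2) - (1 + (v t)^2)) / (2 * v t))"
        using pt num p0 c0 vt by (intro mult_mono divide_right_mono) auto
      finally show ?thesis unfolding F1e .
    qed
    obtain t2 where t2: "0 < t2" "t2 < tc" "\<And>t. t2 < t \<Longrightarrow> t < tc \<Longrightarrow> (v t)^2 < e0"
    proof -
      from eventually_conj[OF eve ev0] obtain t3 where t3: "t3 < tc"
        "\<And>t. t3 < t \<Longrightarrow> t < tc \<Longrightarrow> (v t)^2 < e0 \<and> t \<in> {0<..<tc}"
        unfolding eventually_at_left_field by blast
      define t4 where "t4 = max t3 (tc / 2)"
      have "0 < t4" "t4 < tc" using t3 tc0 by (auto simp: t4_def)
      moreover have "\<And>t. t4 < t \<Longrightarrow> t < tc \<Longrightarrow> (v t)^2 < e0" using t3 by (auto simp: t4_def)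
      ultimately show ?thesis using that by blast
    qed
    define psi where "psi t = p t + C * ln (tc - t)" for t
    have psi_mono: "psi t2 \<le> psi t" if "t2 \<le> t" "t < tc" for t
    proof (rule deriv_nonneg_mono[OF that(1), of psi "\<lambda>x. F1 (v x) (p x) - C / (tc - x)"])
      have "continuous_on {t2..t} p" using contp by (rule continuous_on_subset) (use t2 that in \<open>auto simp: inI\<close>)
      then show "continuous_on {t2..t} psi" unfolding psi_def
        using that by (auto intro!: continuous_intros)
      fix x assume x: "t2 < x" "x < t"
      have xI: "x \<in> I" "0 < x" using x t2 that by (auto simp: inI)
      have "((\<lambda>x. p x + C * ln (tc - x)) has_real_derivative F1 (v x) (p x) + C * (- 1 / (tc - x))) (at x)"
        using x that by (auto intro!: derivative_eq_intros derivs_at(1)[OF xI] simp: field_simps)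
      then have "(psi has_real_derivative F1 (v x) (p x) - C / (tc - x)) (at x)"
        unfolding psi_def by simp
      moreover have "F1 (v x) (p x) - C / (tc - x) \<ge> 0"
        using F1low[OF xI(1) t2(3) xI(2)] x that by simp
      ultimately show "(psi has_real_derivative F1 (v x) (p x) - C / (tc - x)) (at x) \<and> F1 (v x) (p x) - C / (tc - x) \<ge> 0"
        by simp
    qed
    define eta where "eta = min ((tc - t2) / 2) (exp (- (L0 - psi t2) / C - 1))"
    have eta1: "eta \<le> (tc - t2) / 2" unfolding eta_def by (rule min.cobounded1)
    have eta2: "eta \<le> exp (- (L0 - psi t2) / C - 1)" unfolding eta_def by (rule min.cobounded2)
    have eta: "0 < eta" "eta < tc - t2" using t2 eta1 by (auto simp: eta_def)
    define t where "t = tc - eta"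
    have t: "t2 \<le> t" "t < tc" "t \<in> I" using eta t2 by (auto simp: t_def inI)
    have "ln eta \<le> ln (exp (- (L0 - psi t2) / C - 1))" using eta2 eta(1) by (subst ln_le_cancel_iff) auto
    then have "ln eta \<le> - (L0 - psi t2) / C - 1" by simp
    then have "C * ln eta \<le> C * (- (L0 - psi t2) / C - 1)" using C by (intro mult_left_mono) auto
    also have "\<dots> = - (L0 - psi t2) - C" using C by (simp add: field_simps)
    finally have "C * ln eta < psi t2 - L0" using C by simp
    moreover have "psi t2 \<le> p t + C * ln eta" using psi_mono[OF t(1,2)] by (simp add: psi_def t_def)
    ultimately have "p t > L0" by simp
    then show False using L0[OF t(3)] by simp
  qed
  show ?thesis using vbpos vlim plim by blast
qed

end

lemma vd_fst: "(x has_vector_derivative D) F \<Longrightarrow> ((\<lambda>t. fst (x t)) has_real_derivative fst D) F"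
  unfolding has_vector_derivative_def has_field_derivative_def
proof -
  assume "(x has_derivative (\<lambda>h. h *\<^sub>R D)) F"
  then have "((\<lambda>t. fst (x t)) has_derivative (\<lambda>h. fst (h *\<^sub>R D))) F" by (rule has_derivative_fst)
  moreover have "(\<lambda>h. fst (h *\<^sub>R D)) = (*) (fst D)" by (auto simp: fun_eq_iff)
  ultimately show "((\<lambda>t. fst (x t)) has_derivative (*) (fst D)) F" by simp
qed
lemma vd_snd: "(x has_vector_derivative D) F \<Longrightarrow> ((\<lambda>t. snd (x t)) has_real_derivative snd D) F"
  unfolding has_vector_derivative_def has_field_derivative_def
proof -
  assume "(x has_derivative (\<lambda>h. h *\<^sub>R D)) F"
  then have "((\<lambda>t. snd (x t)) has_derivative (\<lambda>h. snd (h *\<^sub>R D))) F" by (rule has_derivative_snd)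
  moreover have "(\<lambda>h. snd (h *\<^sub>R D)) = (*) (snd D)" by (auto simp: fun_eq_iff)
  ultimately show "((\<lambda>t. snd (x t)) has_derivative (*) (snd D)) F" by simp
qed

lemma glue:
  fixes f g f' g' :: "real \<Rightarrow> real"
  assumes tc: "tc > 0" and d: "d > 0"
    and old: "\<And>t. 0 \<le> t \<Longrightarrow> t < tc \<Longrightarrow> (f has_real_derivative f' t) (at t within {0..<tc})"
    and flim: "(f \<longlongrightarrow> l) (at_left tc)" and f'lim: "(f' \<longlongrightarrow> g' tc) (at_left tc)"
    and new: "\<And>t. t \<in> {tc..tc+d} \<Longrightarrow> (g has_real_derivative g' t) (at t within {tc..tc+d})"
    and gl: "g tc = l"
    and t: "0 \<le> t" "t < tc + d"
  shows "((\<lambda>s. if s < tc then f s else g s) has_real_derivative (if t < tc then f' t else g' t)) (at t within {0..<tc+d})"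
proof -
  define h where "h s = (if s < tc then f s else g s)" for s
  have "(h has_real_derivative (if t < tc then f' t else g' t)) (at t within {0..<tc+d})"
  proof (cases t tc rule: linorder_cases)
    case less
    have eq: "at t within {0..<tc+d} = at t within {0..<tc}"
      by (rule at_within_nhd[of t "{..<tc}"]) (use less d in auto)
    have "(f has_real_derivative f' t) (at t within {0..<tc+d})" unfolding eq using old t less by simp
    then have "(h has_real_derivative f' t) (at t within {0..<tc+d})"
      by (rule has_field_derivative_transform_within[where d="tc - t"]) (use less t d in \<open>auto simp: h_def dist_real_def\<close>)
    then show ?thesis using less by simp
  next
    case greater
    have eq: "at t within {tc..tc+d} = at t"
      by (rule at_within_open_subset[of t "{tc<..<tc+d}"]) (use greater t in auto)
    have "(g has_real_derivative g' t) (at t)" using new[of t] greater t eq by simp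
    then have "(g has_real_derivative g' t) (at t within {0..<tc+d})" by (rule has_field_derivative_at_within)
    then have "(h has_real_derivative g' t) (at t within {0..<tc+d})"
      by (rule has_field_derivative_transform_within[where d="t - tc"]) (use greater t tc in \<open>auto simp: h_def dist_real_def\<close>)
    then show ?thesis using greater by simp
  next
    case equal
    have htc: "h tc = l" using gl by (simp add: h_def)
    have right: "((\<lambda>y. (h y - h tc) / (y - tc)) \<longlongrightarrow> g' tc) (at_right tc)"
    proof -
      have "((\<lambda>y. (g y - g tc) / (y - tc)) \<longlongrightarrow> g' tc) (at tc within {tc..tc+d})"
        using new[of tc] d by (simp add: has_field_derivative_iff)
      then have "((\<lambda>y. (g y - g tc) / (y - tc)) \<longlongrightarrow> g' tc) (at_right tc)"
        using at_within_Icc_at_right[of tc "tc + d"] d by simp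
      moreover have "eventually (\<lambda>y. (g y - g tc) / (y - tc) = (h y - h tc) / (y - tc)) (at_right tc)"
        unfolding eventually_at_right_field by (intro exI[of _ "tc + 1"]) (auto simp: h_def)
      ultimately show ?thesis by (rule Lim_transform_eventually)
    qed
    have left: "((\<lambda>y. (h y - h tc) / (y - tc)) \<longlongrightarrow> g' tc) (at_left tc)"
    proof -
      have "((\<lambda>y. (f y - l) / (y - tc)) \<longlongrightarrow> g' tc) (at_left tc)"
      proof (rule lhopital_left[where g="\<lambda>y. y - tc" and f'=f' and g'="\<lambda>_. 1"])
        show "((\<lambda>y. f y - l) \<longlongrightarrow> 0) (at_left tc)" using flim by (simp add: LIM_zero)
        show "((\<lambda>y. y - tc) \<longlongrightarrow> 0) (at_left tc)"
          by (rule tendsto_eq_intros tendsto_ident_at) (auto intro!: tendsto_eq_intros)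
        show "eventually (\<lambda>y. y - tc \<noteq> 0) (at_left tc)"
          unfolding eventually_at_left_field by (intro exI[of _ "tc - 1"]) auto
        show "eventually (\<lambda>y. (1::real) \<noteq> 0) (at_left tc)" by simp
        show "eventually (\<lambda>y. ((\<lambda>y. y - tc) has_real_derivative 1) (at y)) (at_left tc)"
          by (intro always_eventually allI) (auto intro!: derivative_eq_intros)
        have "eventually (\<lambda>y. y \<in> {0<..<tc}) (at_left tc)" using tc by (rule eventually_at_left_real)
        then show "eventually (\<lambda>y. ((\<lambda>y. f y - l) has_real_derivative f' y) (at y)) (at_left tc)"
        proof (rule eventually_mono)
          fix y assume y: "y \<in> {0<..<tc}"
          have "at y within {0..<tc} = at y" by (rule at_within_open_subset[of y "{0<..<tc}"]) (use y in auto)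
          then have "(f has_real_derivative f' y) (at y)" using old[of y] y by simp
          then show "((\<lambda>y. f y - l) has_real_derivative f' y) (at y)" by (auto intro!: derivative_eq_intros)
        qed
        show "filterlim (\<lambda>y. f' y / 1) (nhds (g' tc)) (at_left tc)" using f'lim by simp
      qed
      moreover have "eventually (\<lambda>y. (f y - l) / (y - tc) = (h y - h tc) / (y - tc)) (at_left tc)"
        unfolding eventually_at_left_field by (intro exI[of _ "tc - 1"]) (auto simp: h_def gl)
      ultimately show ?thesis by (rule Lim_transform_eventually)
    qed
    have "(h has_real_derivative g' tc) (at tc)"
      unfolding has_field_derivative_iff by (rule filterlim_split_at[OF left right])
    then show ?thesis using equal by (simp add: has_field_derivative_at_within)
  qed
  moreover have "h = (\<lambda>s. if s < tc then f s else g s)" by (simp add: h_def fun_eq_iff)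
  ultimately show ?thesis by simp
qed

context ctx begin

lemma ext_false:
  assumes tc: "b = ereal tc" and vb: "vb > 0" and vlim: "(v \<longlongrightarrow> vb) (at_left tc)"
    and plim: "(p \<longlongrightarrow> L) (at_left tc)"
    and max: "\<forall>b' v' p'. b < b' \<and> is_sol v' p' b' \<longrightarrow> \<not> (\<forall>t. 0 \<le> t \<and> ereal t < b \<longrightarrow> v' t = v t \<and> p' t = p t)"
  shows False
proof -
  have Ieq: "I = {0..<tc}"
  proof -
    have "I = {s. 0 \<le> s \<and> ereal s < b}" by (rule I_def)
    also have "\<dots> = {0..<tc}" using tc by auto
    finally show ?thesis .
  qed
  have tc0: "0 < tc" using b_pos tc by (simp add: zero_ereal_def)
  obtain d x where d: "d > 0" and x0: "x tc = (vb, L)"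
    and xt: "\<And>t. t \<in> {tc..tc+d} \<Longrightarrow> fst (x t) > 0 \<and> (x has_vector_derivative Fv (x t)) (at t within {tc..tc+d})"
    using ode_exist[OF vb, of tc L] by blast
  define v' where "v' = (\<lambda>s. if s < tc then v s else fst (x s))"
  define p' where "p' = (\<lambda>s. if s < tc then p s else snd (x s))"
  have vne: "vb \<noteq> 0" using vb by simp
  have Dv: "(v' has_real_derivative (if t < tc then F2 (v t) (p t) else fst (Fv (x t)))) (at t within {0..<tc+d})"
    if "0 \<le> t" "t < tc + d" for t
    unfolding v'_def
  proof (rule glue[OF tc0 d _ vlim _ _ _ that, where g'="\<lambda>t. fst (Fv (x t))"])
    show "(v has_real_derivative F2 (v t) (p t)) (at t within {0..<tc})" if "0 \<le> t" "t < tc" for t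
      using derivs(3)[of t] that Ieq by auto
    show "((\<lambda>t. F2 (v t) (p t)) \<longlongrightarrow> fst (Fv (x tc))) (at_left tc)"
      unfolding x0 Fv_def F2_def by (auto intro!: tendsto_eq_intros vlim plim)
    show "((\<lambda>t. fst (x t)) has_real_derivative fst (Fv (x t))) (at t within {tc..tc + d})"
      if "t \<in> {tc..tc + d}" for t using xt[OF that] by (intro vd_fst) blast
    show "fst (x tc) = vb" using x0 by simp
  qed
  have Dp: "(p' has_real_derivative (if t < tc then F1 (v t) (p t) else snd (Fv (x t)))) (at t within {0..<tc+d})"
    if "0 \<le> t" "t < tc + d" for t
    unfolding p'_def
  proof (rule glue[OF tc0 d _ plim _ _ _ that, where g'="\<lambda>t. snd (Fv (x t))"])
    show "(p has_real_derivative F1 (v t) (p t)) (at t within {0..<tc})" if "0 \<le> t" "t < tc" for t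
      using derivs(2)[of t] that Ieq by auto
    show "((\<lambda>t. F1 (v t) (p t)) \<longlongrightarrow> snd (Fv (x tc))) (at_left tc)"
      unfolding x0 Fv_def F1_def Rf_def Qf_def using vne by (auto intro!: tendsto_eq_intros vlim plim)
    show "((\<lambda>t. snd (x t)) has_real_derivative snd (Fv (x t))) (at t within {tc..tc + d})"
      if "t \<in> {tc..tc + d}" for t using xt[OF that] by (intro vd_snd) blast
    show "snd (x tc) = L" using x0 by simp
  qed
  have set': "{s. 0 \<le> s \<and> ereal s < ereal (tc + d)} = {0..<tc+d}" by auto
  have sol': "is_sol v' p' (ereal (tc + d))"
    unfolding is_sol_def set'
  proof (intro conjI allI impI)
    show "0 < ereal (tc + d)" using tc0 d by (simp add: zero_ereal_def)
    fix t assume t: "0 \<le> t \<and> ereal t < ereal (tc + d)"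
    then have t': "0 \<le> t" "t < tc + d" by auto
    show "v' t \<noteq> 0"
    proof (cases "t < tc")
      case True then show ?thesis using v_pos[of t] t' Ieq by (simp add: v'_def)
    next
      case False then show ?thesis using xt[of t] t' by (simp add: v'_def)
    qed
    have eqF1: "(if t < tc then F1 (v t) (p t) else snd (Fv (x t))) = p' t * (p' t * Rf (v' t) - Qf (v' t))"
      by (simp add: v'_def p'_def Fv_def F1_def)
    have eqF2: "(if t < tc then F2 (v t) (p t) else fst (Fv (x t))) = - p' t / 4 * (1 + (v' t)^2) + (1 - (v' t)^2) / 2"
      by (simp add: v'_def p'_def Fv_def F2_def)
    show "(p' has_real_derivative p' t * (p' t * Rf (v' t) - Qf (v' t))) (at t within {0..<tc + d})"
      using Dp[OF t'] unfolding eqF1 .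
    show "(v' has_real_derivative - p' t / 4 * (1 + (v' t)\<^sup>2) + (1 - (v' t)\<^sup>2) / 2) (at t within {0..<tc + d})"
      using Dv[OF t'] unfolding eqF2 .
  qed
  have "b < ereal (tc + d)" using tc d by simp
  moreover have "\<forall>t. 0 \<le> t \<and> ereal t < b \<longrightarrow> v' t = v t \<and> p' t = p t"
    using tc by (auto simp: v'_def p'_def)
  ultimately show False using max sol' by blast
qed

lemma blowup:
  assumes tc: "b = ereal tc"
    and max: "\<forall>b' v' p'. b < b' \<and> is_sol v' p' b' \<longrightarrow> \<not> (\<forall>t. 0 \<le> t \<and> ereal t < b \<longrightarrow> v' t = v t \<and> p' t = p t)"
  shows "filterlim p at_top (at_left tc)"
proof -
  have Ieq: "I = {0..<tc}"
  proof -
    have "I = {s. 0 \<le> s \<and> ereal s < b}" by (rule I_def)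
    also have "\<dots> = {0..<tc}" using tc by auto
    finally show ?thesis .
  qed
  have unb: "\<exists>t\<in>I. p t > M" for M
  proof (rule ccontr)
    assume "\<not> (\<exists>t\<in>I. p t > M)"
    then have "\<And>t. t \<in> I \<Longrightarrow> p t \<le> M" by (simp add: not_less)
    from lims[OF tc this] obtain vb L where "vb > 0" "(v \<longlongrightarrow> vb) (at_left tc)" "(p \<longlongrightarrow> L) (at_left tc)"
      by blast
    then show False using ext_false[OF tc _ _ _ max] by blast
  qed
  show ?thesis unfolding filterlim_at_top
  proof
    fix Z
    obtain t0 where t0: "t0 \<in> I" "p t0 > Z" using unb by blast
    have "t0 < tc" using t0 Ieq by auto
    then have "eventually (\<lambda>s. s \<in> {t0<..<tc}) (at_left tc)" by (rule eventually_at_left_real)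
    then show "eventually (\<lambda>s. Z \<le> p s) (at_left tc)"
    proof (rule eventually_mono)
      fix s assume s: "s \<in> {t0<..<tc}"
      then have "s \<in> I" using t0 Ieq by auto
      then have "p t0 \<le> p s" using p_mono[OF t0(1)] s by simp
      then show "Z \<le> p s" using t0 by simp
    qed
  qed
qed

end

theorem theorem3p9:
  fixes v p :: "real \<Rightarrow> real" and b :: ereal
  assumes "is_max_sol v p b"
    and "(v 0, p 0) \<in> Omega_b"
  defines "D \<equiv> p 0 / (lam * p 0 + mu)"
  shows "(\<forall>t. 0 < t \<and> ereal t < b \<longrightarrow>
            p t > mu * D * exp (mu * t) / (1 - lam * D * exp (mu * t)))
       \<and> (\<exists>tc. b = ereal tc \<and> 0 < tc \<and> tc < - ln (lam * D) / mu
            \<and> filterlim p at_top (at_left tc)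
            \<and> filterlim (\<lambda>t. sqrt (2 * pi * (p t)^2 * (1 / v t + v t))) at_top (at_left tc)
            \<and> filterlim (\<lambda>t. 2 * \<bar>p t\<bar> * max (1 / v t) (v t)) at_top (at_left tc))"
proof -
  have sol: "is_sol v p b" and max: "\<forall>b' v' p'. b < b' \<and> is_sol v' p' b' \<longrightarrow>
        \<not> (\<forall>t. 0 \<le> t \<and> ereal t < b \<longrightarrow> v' t = v t \<and> p' t = p t)"
    using assms(1) unfolding is_max_sol_def by blast+
  interpret ctx v p b using sol assms(2) by unfold_locales
  have c1: "\<forall>t. 0 < t \<and> ereal t < b \<longrightarrow> p t > mu * D * exp (mu * t) / (1 - lam * D * exp (mu * t))"
    using concl1 unfolding D_def by blast
  obtain tc where tc: "b = ereal tc" "0 < tc" "tc < - ln (lam * D) / mu"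
    using finite_b unfolding D_def by blast
  have Ieq: "I = {0..<tc}"
  proof -
    have "I = {s. 0 \<le> s \<and> ereal s < b}" by (rule I_def)
    also have "\<dots> = {0..<tc}" using tc by auto
    finally show ?thesis .
  qed
  have pl: "filterlim p at_top (at_left tc)" by (rule blowup[OF tc(1) max])
  have ev: "eventually (\<lambda>t. t \<in> I) (at_left tc)"
  proof -
    have "eventually (\<lambda>s. s \<in> {0<..<tc}) (at_left tc)" using tc(2) by (rule eventually_at_left_real)
    then show ?thesis by (rule eventually_mono) (auto simp: Ieq)
  qed
  have n2: "filterlim (\<lambda>t. sqrt (2 * pi * (p t)^2 * (1 / v t + v t))) at_top (at_left tc)"
  proof (rule filterlim_at_top_mono[OF pl])
    show "eventually (\<lambda>t. p t \<le> sqrt (2 * pi * (p t)^2 * (1 / v t + v t))) (at_left tc)" using ev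
    proof (rule eventually_mono)
      fix t assume tI: "t \<in> I"
      have vt: "v t > 0" using v_pos[OF tI] .
      have sq: "0 \<le> (v t - 1)^2" by simp
      have "(v t - 1)^2 = (v t)^2 - 2 * v t + 1" by (simp add: power2_diff)
      then have "v t * 2 \<le> (v t)^2 + 1" using sq by linarith
      then have a: "2 \<le> 1 / v t + v t" using vt by (simp add: field_simps power2_eq_square)
      have "(p t)^2 * 1 \<le> (p t)^2 * (2 * pi * (1 / v t + v t))"
      proof (rule mult_left_mono)
        have "1 \<le> 2 * pi * 2" using pi_gt3 by simp
        also have "\<dots> \<le> 2 * pi * (1 / v t + v t)" using a pi_gt_zero by (intro mult_left_mono) auto
        finally show "1 \<le> 2 * pi * (1 / v t + v t)" .
      qed simp
      moreover have "(p t)^2 * (2 * pi * (1 / v t + v t)) = 2 * pi * (p t)^2 * (1 / v t + v t)"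
        by (simp only: ac_simps)
      ultimately have "(p t)^2 \<le> 2 * pi * (p t)^2 * (1 / v t + v t)" by simp
      then have "sqrt ((p t)^2) \<le> sqrt (2 * pi * (p t)^2 * (1 / v t + v t))"
        by (rule real_sqrt_le_mono)
      moreover have "p t \<le> sqrt ((p t)^2)" by simp
      ultimately show "p t \<le> sqrt (2 * pi * (p t)^2 * (1 / v t + v t))" by linarith
    qed
  qed
  have n0: "filterlim (\<lambda>t. 2 * \<bar>p t\<bar> * max (1 / v t) (v t)) at_top (at_left tc)"
  proof (rule filterlim_at_top_mono[OF pl])
    show "eventually (\<lambda>t. p t \<le> 2 * \<bar>p t\<bar> * max (1 / v t) (v t)) (at_left tc)" using ev
    proof (rule eventually_mono)
      fix t assume tI: "t \<in> I"
      have vt: "v t > 0" "v t < 1" using v_pos[OF tI] v_lt1[OF tI] by auto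
      have "1 \<le> 1 / v t" using vt by (simp add: field_simps)
      then have m: "1 \<le> max (1 / v t) (v t)" by simp
      have "p t \<le> 2 * \<bar>p t\<bar> * 1" by simp
      also have "\<dots> \<le> 2 * \<bar>p t\<bar> * max (1 / v t) (v t)" using m by (intro mult_left_mono) auto
      finally show "p t \<le> 2 * \<bar>p t\<bar> * max (1 / v t) (v t)" .
    qed
  qed
  show ?thesis using c1 tc pl n2 n0 by blast
qed

end
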